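(* Let $n,m\ge1$, $\lambda,\delta>0$, $\mathbf P_\gamma\in\mathbb R^{n\times n}$ and $\boldsymbol\Sigma\in\mathbb R^{m\times m}$ symmetric positive definite, $\mathbf m\in\mathbb R^n$, $\mathbf y\in\mathbb R^m$, and $\mathbf F:\mathbb R^n\to\mathbb R^m$ continuously differentiable with Jacobian $\mathbf J(\mathbf u)=\nabla\mathbf F(\mathbf u)$. Fix $\mathbf u_\ast\in\mathbb R^n$, let $r={\rm rank}\,\mathbf J(\mathbf u_\ast)$, and let $\tfrac{\lambda}{\delta}\boldsymbol\Sigma^{-1}\mathbf J(\mathbf u_\ast)\mathbf P_\gamma^{-1}=\mathbf Y\mathbf S\mathbf X^\top$ be a compact generalized SVD with $\mathbf S\in\mathbb R^{r\times r}$ diagonal, $\mathbf Y^\top(\lambda^{-1}\boldsymbol\Sigma)\mathbf Y=\mathbf I_r$, $\mathbf X^\top(\delta\mathbf P_\gamma)\mathbf X=\mathbf I_r$; let $\boldsymbol\Pi=\mathbf X\mathbf X^\top(\delta\mathbf P_\gamma)$ and let $V$ denote the range of $\mathbf I-\boldsymbol\Pi$. For $\mathbf u_r\in\mathbb R^r$, $\mathbf u_\perp\in V$ define $$\Theta_{\rm L}(\mathbf u_r;\mathbf u_\perp)=\mathbf u_r+\mathbf S\mathbf Y^\top\big(\mathbf F(\mathbf u_\ast)+\mathbf J(\mathbf u_\ast)(\mathbf X\mathbf u_r+\mathbf u_\perp+\mathbf m-\mathbf u_\ast)-\mathbf y\big),$$ $$\Theta_{\rm R}(\mathbf u_r;\mathbf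 u_\perp)=\mathbf S\mathbf Y^\top\big(\mathbf F(\mathbf X\mathbf u_r+\mathbf u_\perp+\mathbf m)-\mathbf J(\mathbf u_\ast)(\mathbf X\mathbf u_r+\mathbf u_\perp+\mathbf m-\mathbf u_\ast)-\mathbf F(\mathbf u_\ast)\big).$$ Let $\mathbf m_r=\mathbf X^\top(\delta\mathbf P_\gamma)(\mathbf u_\ast-\mathbf m)$ and assume there is $\varepsilon>0$ such that, with $\mathbb S(\varepsilon)=\{\mathbf u_r\in\mathbb R^r:\|\mathbf u_r-\mathbf m_r\|<\varepsilon\}$, $$\sup_{\mathbf u_r\in\mathbb S(\varepsilon),\,\mathbf u_\perp\in V}\sigma_{\max}\Big((\mathbf I_r+\mathbf S^2)^{-1}\nabla_{\mathbf u_r}\Theta_{\rm R}(\mathbf u_r;\mathbf u_\perp)\Big)<1.$$ For $\tilde\varepsilon>0$ and $\tau\in(0,1)$ define $\psi:\mathbb R_{\ge0}\to\mathbb R$ by $\psi(s)=s$ if $s<\tilde\varepsilon(1-\tau)$; $\psi(s)=\tilde\varepsilon-\frac{\tau\tilde\varepsilon}{4}+\frac{s-\tilde\varepsilon}{2}-\frac{(s-\tilde\varepsilon)^2}{4\tau\tilde\varepsilon}$ if $s\in[\tilde\varepsilon(1-\tau),\tilde\varepsilon(1+\tau))$; $\psi(s)=\tilde\varepsilon$ if $s\ge\tilde\varepsilon(1+\tau)$; and define $\boldsymbol\Psi(\mathbf u_r)=\mathbf m_r+\frac{\psi(\|\mathbf u_r-\mathbf m_r\|)}{\|\mathbf u_r-\mathbf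 m_r\|}(\mathbf u_r-\mathbf m_r)$. Given $\tilde\varepsilon\le\varepsilon$ and $0<\tau\ll1$ (in particular $\tau\in(0,1)$), define $$\widetilde\Theta(\mathbf u_r;\mathbf u_\perp)=\Theta_{\rm L}(\mathbf u_r;\mathbf u_\perp)+\Theta_{\rm R}(\boldsymbol\Psi(\mathbf u_r);\mathbf u_\perp).$$ Then for every $\mathbf u_\perp\in V$ the map $\mathbf u_r\mapsto\widetilde\Theta(\mathbf u_r;\mathbf u_\perp)$ is a diffeomorphism of $\mathbb R^r$.
   Context: $\sigma_{\max}$ denotes the largest singular value. Bold $\mathbf m\in\mathbb R^n$ is a fixed (prior mean) vector. $\boldsymbol\Psi(\mathbf m_r)$ is interpreted as $\mathbf m_r$. *)

theory Defs
  imports "HOL-Analysis.Analysis"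
begin

definition sym_pos_def :: "real^'n^'n \<Rightarrow> bool" where
  "sym_pos_def A \<longleftrightarrow> transpose A = A \<and> (\<forall>x. x \<noteq> 0 \<longrightarrow> x \<bullet> (A *v x) > 0)"

definition diagonal_mat :: "real^'n^'n \<Rightarrow> bool" where
  "diagonal_mat A \<longleftrightarrow> (\<forall>i j. i \<noteq> j \<longrightarrow> A $ i $ j = 0)"

definition sigma_max :: "real^'n^'m \<Rightarrow> real" where
  "sigma_max A = sqrt (Max {\<mu>. \<exists>x. x \<noteq> 0 \<and> (transpose A ** A) *v x = \<mu> *\<^sub>R x})"

definition C1_map :: "(real^'n \<Rightarrow> real^'m) \<Rightarrow> bool" where
  "C1_map f \<longleftrightarrow> (\<forall>x. f differentiable (at x)) \<and> continuous_on UNIV (\<lambda>x. jacobian f (at x))"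

definition C1_diffeomorphism :: "(real^'n \<Rightarrow> real^'n) \<Rightarrow> bool" where
  "C1_diffeomorphism f \<longleftrightarrow> bij f \<and> C1_map f \<and> C1_map (inv f)"

definition psi_cut :: "real \<Rightarrow> real \<Rightarrow> real \<Rightarrow> real" where
  "psi_cut et \<tau> s =
     (if s < et * (1 - \<tau>) then s
      else if s < et * (1 + \<tau>) then
        et - \<tau> * et / 4 + (s - et) / 2 - (s - et)^2 / (4 * \<tau> * et)
      else et)"

definition Psi_map :: "real \<Rightarrow> real \<Rightarrow> real^'r \<Rightarrow> real^'r \<Rightarrow> real^'r" where
  "Psi_map et \<tau> mr ur =
     (if ur = mr then mr
      else mr + (psi_cut et \<tau> (norm (ur - mr)) / norm (ur - mr)) *\<^sub>R (ur - mr))"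

end

theory Submission
  imports Defs
begin
definition dpsi :: "real \<Rightarrow> real \<Rightarrow> real \<Rightarrow> real" where
  "dpsi et \<tau> s =
     (if s < et * (1 - \<tau>) then 1
      else if s < et * (1 + \<tau>) then 1/2 - (s - et) / (2 * \<tau> * et)
      else 0)"

lemma deriv_glue:
  fixes f g h :: "real \<Rightarrow> real"
  assumes "(g has_real_derivative D) (at x)" "(h has_real_derivative D) (at x)"
   "eventually (\<lambda>y. f y = g y) (at_left x)" "eventually (\<lambda>y. f y = h y) (at_right x)"
   "f x = g x" "f x = h x"
  shows "(f has_real_derivative D) (at x)"
proof -
  have g: "((\<lambda>y. (g y - g x) / (y - x)) \<longlongrightarrow> D) (at x)" using assms(1) has_field_derivative_iff by blast
  have h: "((\<lambda>y. (h y - h x) / (y - x)) \<longlongrightarrow> D) (at x)" using assms(2) has_field_derivative_iff by blast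
  have gl: "((\<lambda>y. (g y - g x) / (y - x)) \<longlongrightarrow> D) (at_left x)" using g filterlim_at_split by blast
  have hr: "((\<lambda>y. (h y - h x) / (y - x)) \<longlongrightarrow> D) (at_right x)" using h filterlim_at_split by blast
  have "((\<lambda>y. (f y - f x) / (y - x)) \<longlongrightarrow> D) (at_left x)"
    by (rule Lim_transform_eventually[OF gl]) (use assms(3,5) in \<open>auto elim: eventually_mono\<close>)
  moreover have "((\<lambda>y. (f y - f x) / (y - x)) \<longlongrightarrow> D) (at_right x)"
    by (rule Lim_transform_eventually[OF hr]) (use assms(4,6) in \<open>auto elim: eventually_mono\<close>)
  ultimately show ?thesis using has_field_derivative_iff filterlim_at_split by blast
qed

lemma cont_glue:
  fixes f g h :: "real \<Rightarrow> real"
  assumes "isCont g x" "isCont h x"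
   "eventually (\<lambda>y. f y = g y) (at_left x)" "eventually (\<lambda>y. f y = h y) (at_right x)"
   "f x = g x" "f x = h x"
  shows "isCont f x"
proof -
  have gl: "(g \<longlongrightarrow> f x) (at_left x)" using assms(1,5) filterlim_at_split isCont_def by metis
  have hr: "(h \<longlongrightarrow> f x) (at_right x)" using assms(2,6) filterlim_at_split isCont_def by metis
  have "(f \<longlongrightarrow> f x) (at_left x)"
    by (rule Lim_transform_eventually[OF gl]) (use assms(3) in \<open>auto elim: eventually_mono\<close>)
  moreover have "(f \<longlongrightarrow> f x) (at_right x)"
    by (rule Lim_transform_eventually[OF hr]) (use assms(4) in \<open>auto elim: eventually_mono\<close>)
  ultimately show ?thesis using isCont_def filterlim_at_split by blast
qed

locale psiloc =
  fixes et \<tau> :: real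
  assumes et: "et > 0" and tau: "0 < \<tau>" "\<tau> < 1"
begin

abbreviation "a \<equiv> et * (1 - \<tau>)"
abbreviation "b \<equiv> et * (1 + \<tau>)"
abbreviation "q \<equiv> (\<lambda>s. et - \<tau> * et / 4 + (s - et) / 2 - (s - et)^2 / (4 * \<tau> * et))"
abbreviation "dq \<equiv> (\<lambda>s::real. 1/2 - (s - et) / (2 * \<tau> * et))"

lemma ab: "0 < a" "a < et" "et < b" using et tau by auto
lemma nz: "et \<noteq> 0" "\<tau> \<noteq> 0" using et tau by auto
lemma psi_small: "s < a \<Longrightarrow> psi_cut et \<tau> s = s" by (simp add: psi_cut_def)
lemma psi_mid: "\<not> s < a \<Longrightarrow> s < b \<Longrightarrow> psi_cut et \<tau> s = q s"
  by (simp only: psi_cut_def if_False if_True)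
lemma psi_big: "\<not> s < b \<Longrightarrow> psi_cut et \<tau> s = et"
proof -
  assume h: "\<not> s < b"
  then have "\<not> s < a" using ab by linarith
  then show ?thesis using h by (simp only: psi_cut_def if_False)
qed
lemma dpsi_mid: "\<not> s < a \<Longrightarrow> s < b \<Longrightarrow> dpsi et \<tau> s = dq s"
  by (simp only: dpsi_def if_False if_True)
lemma dpsi_big: "\<not> s < b \<Longrightarrow> dpsi et \<tau> s = 0"
proof -
  assume h: "\<not> s < b"
  then have "\<not> s < a" using ab by linarith
  then show ?thesis using h by (simp only: dpsi_def if_False)
qed
lemma dpsi_small: "s < a \<Longrightarrow> dpsi et \<tau> s = 1" by (simp add: dpsi_def)

lemma q_deriv: "(q has_real_derivative dq s) (at s)"
  using et tau ab
  by (auto intro!: derivative_eq_intros simp: field_simps power2_eq_square)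

lemma q_a: "q a = a" using et tau nz by (simp add: field_simps power2_eq_square)
lemma q_b: "q b = et" using et tau nz by (simp add: field_simps power2_eq_square)
lemma dq_a: "dq a = 1" using et tau nz by (simp add: field_simps)
lemma dq_b: "dq b = 0" using et tau nz by (simp add: field_simps)

lemma psi_deriv: "(psi_cut et \<tau> has_real_derivative dpsi et \<tau> s) (at s)"
proof -
  consider "s < a" | "s = a" | "a < s" "s < b" | "s = b" | "s > b" by linarith
  then show ?thesis
  proof cases
    case 1
    have ev: "eventually (\<lambda>y. y < a) (nhds s)" using 1 eventually_nhds_in_open[of "{..<a}" s] by auto
    have ev2: "eventually (\<lambda>y. psi_cut et \<tau> y = y) (nhds s)" by (rule eventually_mono[OF ev]) (rule psi_small)
    show ?thesis using 1
      by (subst DERIV_cong_ev[OF refl ev2 refl]) (simp add: dpsi_small)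
  next
    case 2
    show ?thesis
    proof (rule deriv_glue[where g="\<lambda>y. y" and h=q])
      show "((\<lambda>y. y) has_real_derivative dpsi et \<tau> s) (at s)" using 2 ab dq_a dpsi_mid[of s] by simp
      show "(q has_real_derivative dpsi et \<tau> s) (at s)" using 2 q_deriv[of s] dq_a ab dpsi_mid[of s] by simp
      show "\<forall>\<^sub>F y in at_left s. psi_cut et \<tau> y = y"
        using eventually_at_left_real[of 0 s] 2 ab by (auto simp: psi_small elim!: eventually_mono)
      show "\<forall>\<^sub>F y in at_right s. psi_cut et \<tau> y = q y"
        using eventually_at_right_real[of s b] 2 ab by (auto intro!: psi_mid elim!: eventually_mono)
      show "psi_cut et \<tau> s = s" using 2 ab q_a psi_mid[of s] by simp
      show "psi_cut et \<tau> s = q s" using 2 ab q_a psi_mid[of s] by simp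
    qed
  next
    case 3
    have ev: "eventually (\<lambda>y. y \<in> {a<..<b}) (nhds s)" using 3 eventually_nhds_in_open[of "{a<..<b}" s] by auto
    have ev2: "eventually (\<lambda>y. psi_cut et \<tau> y = q y) (nhds s)" by (rule eventually_mono[OF ev]) (auto intro!: psi_mid)
    show ?thesis using 3 q_deriv[of s] dpsi_mid[of s]
      by (subst DERIV_cong_ev[OF refl ev2 refl]) simp
  next
    case 4
    show ?thesis
    proof (rule deriv_glue[where g=q and h="\<lambda>y. et"])
      show "((\<lambda>y. et) has_real_derivative dpsi et \<tau> s) (at s)" using 4 dpsi_big[of s] by simp
      show "(q has_real_derivative dpsi et \<tau> s) (at s)" using 4 q_deriv[of s] dq_b dpsi_big[of s] by simp
      show "\<forall>\<^sub>F y in at_left s. psi_cut et \<tau> y = q y"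
        using eventually_at_left_real[of a s] 4 ab by (auto intro!: psi_mid elim!: eventually_mono)
      show "\<forall>\<^sub>F y in at_right s. psi_cut et \<tau> y = et"
        using eventually_at_right_real[of s "b+1"] 4 ab by (auto intro!: psi_big elim!: eventually_mono)
      show "psi_cut et \<tau> s = q s" using 4 q_b psi_big[of s] by simp
      show "psi_cut et \<tau> s = et" using 4 psi_big[of s] by simp
    qed
  next
    case 5
    have ev: "eventually (\<lambda>y. y > b) (nhds s)" using 5 eventually_nhds_in_open[of "{b<..}" s] by auto
    have ev2: "eventually (\<lambda>y. psi_cut et \<tau> y = et) (nhds s)" by (rule eventually_mono[OF ev]) (auto intro!: psi_big)
    show ?thesis using 5 dpsi_big[of s]
      by (subst DERIV_cong_ev[OF refl ev2 refl]) simp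
  qed
qed

lemma psi_cont: "isCont (psi_cut et \<tau>) s"
  using psi_deriv DERIV_isCont by blast

lemma dq_cont: "isCont dq s" using nz by (intro continuous_intros) auto

lemma dpsi_cont: "isCont (dpsi et \<tau>) s"
proof -
  consider "s < a" | "s = a" | "a < s" "s < b" | "s = b" | "s > b" by linarith
  then show ?thesis
  proof cases
    case 1
    have ev: "eventually (\<lambda>y. y < a) (nhds s)" using 1 eventually_nhds_in_open[of "{..<a}" s] by auto
    have ev2: "eventually (\<lambda>y. dpsi et \<tau> y = 1) (nhds s)" by (rule eventually_mono[OF ev]) (rule dpsi_small)
    show ?thesis
      by (subst isCont_cong[OF ev2]) simp
  next
    case 2
    show ?thesis
    proof (rule cont_glue[where g="\<lambda>y. 1" and h=dq])
      show "\<forall>\<^sub>F y in at_left s. dpsi et \<tau> y = 1"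
        using eventually_at_left_real[of 0 s] 2 ab by (auto simp: dpsi_small elim!: eventually_mono)
      show "\<forall>\<^sub>F y in at_right s. dpsi et \<tau> y = dq y"
        using eventually_at_right_real[of s b] 2 ab by (auto intro!: dpsi_mid elim!: eventually_mono)
      show "dpsi et \<tau> s = 1" using 2 ab dq_a dpsi_mid[of s] by simp
      show "dpsi et \<tau> s = dq s" using 2 ab dpsi_mid[of s] by simp
    qed (auto intro!: dq_cont)
  next
    case 3
    have ev: "eventually (\<lambda>y. y \<in> {a<..<b}) (nhds s)" using 3 eventually_nhds_in_open[of "{a<..<b}" s] by auto
    have ev2: "eventually (\<lambda>y. dpsi et \<tau> y = dq y) (nhds s)" by (rule eventually_mono[OF ev]) (auto intro!: dpsi_mid)
    show ?thesis
      by (subst isCont_cong[OF ev2]) (rule dq_cont)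
  next
    case 4
    show ?thesis
    proof (rule cont_glue[where g=dq and h="\<lambda>y. 0"])
      show "\<forall>\<^sub>F y in at_left s. dpsi et \<tau> y = dq y"
        using eventually_at_left_real[of a s] 4 ab by (auto intro!: dpsi_mid elim!: eventually_mono)
      show "\<forall>\<^sub>F y in at_right s. dpsi et \<tau> y = 0"
        using eventually_at_right_real[of s "b+1"] 4 ab by (auto intro!: dpsi_big elim!: eventually_mono)
      show "dpsi et \<tau> s = dq s" using 4 dq_b dpsi_big[of s] by simp
      show "dpsi et \<tau> s = 0" using 4 dpsi_big[of s] by simp
    qed (auto intro!: dq_cont)
  next
    case 5
    have ev: "eventually (\<lambda>y. y > b) (nhds s)" using 5 eventually_nhds_in_open[of "{b<..}" s] by auto
    have ev2: "eventually (\<lambda>y. dpsi et \<tau> y = 0) (nhds s)" by (rule eventually_mono[OF ev]) (auto intro!: dpsi_big)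
    show ?thesis
      by (subst isCont_cong[OF ev2]) simp
  qed
qed

lemma cases3: obtains "s < a" | "\<not> s < a" "s < b" | "\<not> s < b" by blast

lemma dpsi_bounds: "0 \<le> dpsi et \<tau> s" "dpsi et \<tau> s \<le> 1"
proof -
  have "0 \<le> dpsi et \<tau> s \<and> dpsi et \<tau> s \<le> 1"
  proof (cases s rule: cases3)
    case 2
    have e: "0 < 2 * \<tau> * et" using et tau by auto
    have "-(\<tau>*et) \<le> s - et" "s - et < \<tau> * et" using 2 by (auto simp: algebra_simps)
    then have "0 \<le> dq s \<and> dq s \<le> 1"
      using e nz by (auto simp: field_simps)
    then show ?thesis using 2 dpsi_mid by simp
  qed (auto simp: dpsi_small dpsi_big)
  then show "0 \<le> dpsi et \<tau> s" "dpsi et \<tau> s \<le> 1" by auto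
qed

lemma psi_le: "psi_cut et \<tau> s \<le> s"
proof (cases s rule: cases3)
  case 2
  have e: "0 < 4 * \<tau> * et" using et tau by auto
  have key: "(s - q s) * (4 * \<tau> * et) = (s - et + \<tau> * et)^2"
    using nz by (simp add: left_diff_distrib distrib_right) (simp add: power2_eq_square algebra_simps, simp add: field_simps)
  have "0 \<le> s - q s" using key e by (metis zero_le_power2 zero_le_mult_iff not_less)
  then show ?thesis using 2 psi_mid[of s] by linarith
next
  case 3 then show ?thesis using ab psi_big[of s] by linarith
qed (simp add: psi_small)

lemma psi_le_et: "psi_cut et \<tau> s \<le> et"
proof (cases s rule: cases3)
  case 2
  have e: "0 < 4 * \<tau> * et" using et tau by auto
  have key: "(et - q s) * (4 * \<tau> * et) = (\<tau> * et - (s - et))^2"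
    using nz by (simp add: left_diff_distrib distrib_right) (simp add: power2_eq_square algebra_simps, simp add: field_simps)
  have "0 \<le> et - q s" using key e by (metis zero_le_power2 zero_le_mult_iff not_less)
  then show ?thesis using 2 psi_mid[of s] by linarith
next
  case 1 then show ?thesis using ab psi_small[of s] by linarith
qed (simp add: psi_big)

lemma psi_pos: "s > 0 \<Longrightarrow> psi_cut et \<tau> s > 0"
proof (cases s rule: cases3)
  case 2
  have e: "0 < 4 * \<tau> * et" using et tau by auto
  have key: "(q s - a) * (4 * \<tau> * et) = (3 * \<tau> * et - (s - et)) * (\<tau> * et + (s - et))"
    using nz by (simp add: left_diff_distrib distrib_right) (simp add: power2_eq_square algebra_simps, simp add: field_simps)
  have "3 * \<tau> * et - (s - et) > 0" "\<tau> * et + (s - et) \<ge> 0" using 2 et tau by (auto simp: algebra_simps)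
  then have "0 \<le> q s - a" using key e by (metis mult_nonneg_nonneg zero_le_mult_iff not_less less_imp_le)
  then show ?thesis using 2 psi_mid[of s] ab by linarith
next
  case 3 then show ?thesis using ab psi_big[of s] by linarith
qed (simp add: psi_small)

end

context psiloc begin

definition rho :: "'a::real_inner \<Rightarrow> real" where
  "rho v = psi_cut et \<tau> (norm v) / norm v"

definition phi :: "'a::real_inner \<Rightarrow> 'a" where
  "phi v = rho v *\<^sub>R v"

definition Dphi :: "'a::real_inner \<Rightarrow> 'a \<Rightarrow> 'a" where
  "Dphi v h = (if v = 0 then h else
     rho v *\<^sub>R h + ((dpsi et \<tau> (norm v) - rho v) * (h \<bullet> sgn v)) *\<^sub>R sgn v)"

lemma rho_bounds: "v \<noteq> 0 \<Longrightarrow> 0 < rho v \<and> rho v \<le> 1"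
  using psi_pos[of "norm v"] psi_le[of "norm v"] by (auto simp: rho_def field_simps)

lemma rho_small: "norm v < a \<Longrightarrow> v \<noteq> 0 \<Longrightarrow> rho v = 1"
  using psi_small by (simp add: rho_def)

lemma norm_phi: "norm (phi v) \<le> et"
proof (cases "v = 0")
  case True then show ?thesis using et by (simp add: phi_def)
next
  case False
  have "norm (phi v) = psi_cut et \<tau> (norm v)"
    using False psi_pos[of "norm v"] by (simp add: phi_def rho_def)
  then show ?thesis using psi_le_et by simp
qed

lemma phi_small: "norm v < a \<Longrightarrow> phi v = v"
  using rho_small[of v] by (cases "v = 0") (auto simp: phi_def)

lemma Dphi_small: "norm v < a \<Longrightarrow> Dphi v h = h"
  using rho_small[of v] dpsi_small[of "norm v"] by (simp add: Dphi_def)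

lemma phi_deriv: "(phi has_derivative Dphi v) (at v)"
proof (cases "v = 0")
  case True
  have "((\<lambda>x. x) has_derivative (\<lambda>h. h)) (at v)" by (rule has_derivative_ident)
  then have "(phi has_derivative (\<lambda>h. h)) (at v)"
    by (rule has_derivative_transform_within_open[where s="ball 0 a"])
       (use True ab in \<open>auto simp: phi_small\<close>)
  then show ?thesis using True by (simp add: Dphi_def[abs_def])
next
  case False
  let ?s = "norm v"
  have s: "?s > 0" using False by simp
  have n: "(norm has_derivative (\<lambda>h. h \<bullet> sgn v)) (at v)" using has_derivative_norm[OF False] .
  have p: "((\<lambda>x. psi_cut et \<tau> (norm x)) has_derivative (\<lambda>h. (h \<bullet> sgn v) * dpsi et \<tau> ?s)) (at v)"
    by (rule DERIV_compose_FDERIV[OF psi_deriv n])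
  have r: "(rho has_derivative (\<lambda>h. ((h \<bullet> sgn v) * dpsi et \<tau> ?s * ?s - psi_cut et \<tau> ?s * (h \<bullet> sgn v)) / (?s * ?s))) (at v)"
    unfolding rho_def[abs_def] by (rule has_derivative_divide'[OF p n]) (use False in simp)
  have "(phi has_derivative (\<lambda>h. rho v *\<^sub>R h + (((h \<bullet> sgn v) * dpsi et \<tau> ?s * ?s - psi_cut et \<tau> ?s * (h \<bullet> sgn v)) / (?s * ?s)) *\<^sub>R v)) (at v)"
    unfolding phi_def[abs_def] by (rule has_derivative_scaleR[OF r has_derivative_ident])
  then show ?thesis
  proof (rule has_derivative_eq_rhs)
    show "(\<lambda>h. rho v *\<^sub>R h + (((h \<bullet> sgn v) * dpsi et \<tau> ?s * ?s - psi_cut et \<tau> ?s * (h \<bullet> sgn v)) / (?s * ?s)) *\<^sub>R v) = Dphi v"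
    proof
      fix h
      have "(((h \<bullet> sgn v) * dpsi et \<tau> ?s * ?s - psi_cut et \<tau> ?s * (h \<bullet> sgn v)) / (?s * ?s)) *\<^sub>R v
           = ((dpsi et \<tau> ?s - rho v) * (h \<bullet> sgn v)) *\<^sub>R sgn v"
        using s by (simp add: sgn_div_norm rho_def field_simps scaleR_scaleR)
      then show "rho v *\<^sub>R h + (((h \<bullet> sgn v) * dpsi et \<tau> ?s * ?s - psi_cut et \<tau> ?s * (h \<bullet> sgn v)) / (?s * ?s)) *\<^sub>R v = Dphi v h"
        using False by (simp add: Dphi_def)
    qed
  qed
qed

lemma Dphi_cont: "isCont (\<lambda>v. Dphi v h) v"
proof (cases "v = 0")
  case True
  have ev: "eventually (\<lambda>x. x \<in> ball 0 a) (nhds v)" using True ab by (intro eventually_nhds_in_open) auto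
  have ev2: "eventually (\<lambda>x. Dphi x h = h) (nhds v)" by (rule eventually_mono[OF ev]) (simp add: Dphi_small)
  show ?thesis by (subst isCont_cong[OF ev2]) simp
next
  case False
  have ev: "eventually (\<lambda>x. x \<in> - {0}) (nhds v)" using False by (intro eventually_nhds_in_open) auto
  have ev2: "eventually (\<lambda>x. Dphi x h = (psi_cut et \<tau> (norm x) / norm x) *\<^sub>R h + ((dpsi et \<tau> (norm x) - psi_cut et \<tau> (norm x) / norm x) * (h \<bullet> sgn x)) *\<^sub>R sgn x) (nhds v)"
    by (rule eventually_mono[OF ev]) (auto simp: Dphi_def rho_def)
  have c1: "isCont (\<lambda>x. psi_cut et \<tau> (norm x)) v"
    by (rule continuous_at_compose[unfolded o_def, OF continuous_norm[OF continuous_ident] psi_cont])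
  have c2: "isCont (\<lambda>x. dpsi et \<tau> (norm x)) v"
    by (rule continuous_at_compose[unfolded o_def, OF continuous_norm[OF continuous_ident] dpsi_cont])
  have c3: "isCont (\<lambda>x. sgn x) v" using False by (intro isCont_sgn continuous_ident)
  show ?thesis
    by (subst isCont_cong[OF ev2]) (use False in \<open>intro continuous_intros c1 c2 c3, auto\<close>)
qed

lemma Dphi_norm: "norm (Dphi v h) \<le> norm h"
proof (cases "v = 0")
  case True then show ?thesis by (simp add: Dphi_def)
next
  case False
  define u where "u = sgn v"
  define r where "r = rho v"
  define d where "d = dpsi et \<tau> (norm v)"
  define k where "k = h \<bullet> u"
  have u: "u \<bullet> u = 1" using False by (simp add: u_def dot_square_norm norm_sgn)
  have r: "0 \<le> r" "r \<le> 1" using rho_bounds[OF False] by (auto simp: r_def)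
  have d: "0 \<le> d" "d \<le> 1" using dpsi_bounds by (auto simp: d_def)
  have kh: "k^2 \<le> h \<bullet> h"
  proof -
    have "\<bar>k\<bar> \<le> norm h * norm u" unfolding k_def by (rule Cauchy_Schwarz_ineq2)
    moreover have "norm u = 1" using False by (simp add: u_def norm_sgn)
    ultimately have "\<bar>k\<bar> \<le> norm h" by simp
    then have "k^2 \<le> (norm h)^2" by (metis abs_ge_zero power2_abs power_mono)
    then show ?thesis by (simp add: dot_square_norm)
  qed
  have eq: "Dphi v h = r *\<^sub>R h + ((d - r) * k) *\<^sub>R u"
    using False by (simp add: Dphi_def u_def r_def d_def k_def)
  have "(norm (Dphi v h))^2 = r^2 * (h \<bullet> h) + 2 * r * (d - r) * k^2 + (d - r)^2 * k^2"
    unfolding eq power2_norm_eq_inner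
    by (simp add: inner_add_left inner_add_right inner_commute[of u h] k_def[symmetric] u power2_eq_square algebra_simps)
  also have "\<dots> = r^2 * (h \<bullet> h - k^2) + d^2 * k^2" by (simp add: power2_eq_square algebra_simps)
  also have "\<dots> \<le> 1 * (h \<bullet> h - k^2) + 1 * k^2"
  proof (rule add_mono)
    show "r\<^sup>2 * (h \<bullet> h - k\<^sup>2) \<le> 1 * (h \<bullet> h - k\<^sup>2)"
      using kh r by (intro mult_right_mono) (auto simp: power_le_one)
    show "d\<^sup>2 * k\<^sup>2 \<le> 1 * k\<^sup>2"
      using d by (intro mult_right_mono) (auto simp: power_le_one)
  qed
  also have "\<dots> = (norm h)^2" by (simp add: dot_square_norm)
  finally show ?thesis by (simp add: power2_le_iff_abs_le)
qed

lemma phi_lipschitz: "norm (phi x - phi y) \<le> norm (x - (y::'a::euclidean_space))"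
proof -
  have "norm (phi x - phi y) \<le> 1 * norm (x - y)"
  proof (rule differentiable_bound[where S=UNIV and f'="Dphi :: 'a \<Rightarrow> 'a \<Rightarrow> 'a"])
    show "onorm (Dphi z) \<le> 1" for z :: 'a
      by (rule onorm_le) (simp add: Dphi_norm)
    show "(phi has_derivative Dphi z) (at z within UNIV)" for z :: 'a
      using phi_deriv[of z] by simp
  qed auto
  then show ?thesis by simp
qed

end

lemma transpose_inner: "(transpose A *v z) \<bullet> y = z \<bullet> ((A::real^'n^'m) *v y)"
  by (simp add: dot_lmul_matrix)

lemma nsq: "(norm (p - s *\<^sub>R q))^2 = (norm p)^2 - 2 * s * (p \<bullet> q) + s^2 * (norm q)^2"
  for p q :: "'a::real_inner"
proof -
  have "(norm (p - s *\<^sub>R q))^2 = (p - s *\<^sub>R q) \<bullet> (p - s *\<^sub>R q)" by (simp add: power2_norm_eq_inner)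
  also have "\<dots> = p \<bullet> p - s * (q \<bullet> p) - s * (p \<bullet> q) + s * s * (q \<bullet> q)"
    by (simp add: inner_diff_left inner_diff_right algebra_simps)
  also have "q \<bullet> p = p \<bullet> q" by (rule inner_commute)
  finally show ?thesis by (simp add: dot_square_norm algebra_simps power2_eq_square)
qed

lemma sigma_max_bound:
  fixes A :: "real^'n^'m"
  assumes "sigma_max A \<le> c"
  shows "norm (A *v x) \<le> c * norm x"
proof -
  define B where "B = transpose A ** A"
  define E where "E = {\<mu>. \<exists>x. x \<noteq> 0 \<and> B *v x = \<mu> *\<^sub>R x}"
  have Bin: "(B *v x) \<bullet> y = (A *v x) \<bullet> (A *v y)" for x y
    by (simp add: B_def flip: matrix_vector_mul_assoc transpose_inner)
  have Bin2: "(B *v x) \<bullet> y = x \<bullet> (B *v y)" for x y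
    using Bin[of x y] Bin[of y x] by (simp add: inner_commute)
  define ev where "ev \<mu> = (SOME x. x \<noteq> 0 \<and> B *v x = \<mu> *\<^sub>R x)" for \<mu>
  have ev: "ev \<mu> \<noteq> 0 \<and> B *v ev \<mu> = \<mu> *\<^sub>R ev \<mu>" if "\<mu> \<in> E" for \<mu>
  proof -
    have "\<exists>x. x \<noteq> 0 \<and> B *v x = \<mu> *\<^sub>R x" using that by (simp add: E_def)
    then show ?thesis unfolding ev_def by (rule someI_ex)
  qed
  have orth: "ev \<mu>1 \<bullet> ev \<mu>2 = 0" if "\<mu>1 \<in> E" "\<mu>2 \<in> E" "\<mu>1 \<noteq> \<mu>2" for \<mu>1 \<mu>2
  proof -
    have "\<mu>1 * (ev \<mu>1 \<bullet> ev \<mu>2) = (B *v ev \<mu>1) \<bullet> ev \<mu>2" using ev[OF that(1)] by simp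
    also have "\<dots> = ev \<mu>1 \<bullet> (B *v ev \<mu>2)" by (rule Bin2)
    also have "\<dots> = \<mu>2 * (ev \<mu>1 \<bullet> ev \<mu>2)" using ev[OF that(2)] by simp
    finally show ?thesis using that(3) by simp
  qed
  have inj: "inj_on ev E"
  proof (rule inj_onI)
    fix \<mu>1 \<mu>2 assume h: "\<mu>1 \<in> E" "\<mu>2 \<in> E" "ev \<mu>1 = ev \<mu>2"
    show "\<mu>1 = \<mu>2"
    proof (rule ccontr)
      assume "\<mu>1 \<noteq> \<mu>2"
      then have "ev \<mu>1 \<bullet> ev \<mu>1 = 0" using orth[OF h(1,2)] h(3) by simp
      then show False using ev[OF h(1)] by simp
    qed
  qed
  have "independent (ev ` E)"
  proof (rule pairwise_orthogonal_independent)
    show "pairwise orthogonal (ev ` E)"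
    proof (rule pairwiseI)
      fix x y assume "x \<in> ev ` E" "y \<in> ev ` E" "x \<noteq> y"
      then obtain \<mu>1 \<mu>2 where m: "\<mu>1 \<in> E" "\<mu>2 \<in> E" "x = ev \<mu>1" "y = ev \<mu>2" by auto
      then have "\<mu>1 \<noteq> \<mu>2" using \<open>x \<noteq> y\<close> by auto
      then show "orthogonal x y" using orth[OF m(1,2)] m(3,4) by (simp add: orthogonal_def)
    qed
    show "0 \<notin> ev ` E"
    proof
      assume "0 \<in> ev ` E"
      then obtain \<mu> where "\<mu> \<in> E" "ev \<mu> = 0" by auto
      then show False using ev by auto
    qed
  qed
  then have "finite (ev ` E)" by (rule finiteI_independent)
  then have finE: "finite E" using inj by (rule finite_imageD)
  have sne: "sphere (0::real^'n) 1 \<noteq> {}"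
  proof -
    have "axis undefined (1::real) \<in> sphere (0::real^'n) 1" by simp
    then show ?thesis by blast
  qed
  have cont: "continuous_on (sphere 0 1) (\<lambda>x::real^'n. (norm (A *v x))^2)"
    by (intro continuous_intros linear_continuous_on matrix_vector_mul_bounded_linear)
  obtain x0 where x0: "x0 \<in> sphere 0 1" and mx: "\<And>y. y \<in> sphere 0 1 \<Longrightarrow> (norm (A *v y))^2 \<le> (norm (A *v x0))^2"
    using continuous_attains_sup[OF compact_sphere sne cont] by blast
  define \<mu>0 where "\<mu>0 = (norm (A *v x0))^2"
  have n0: "norm x0 = 1" using x0 by simp
  have all: "(norm (A *v x))^2 \<le> \<mu>0 * (norm x)^2" for x
  proof (cases "x = 0")
    case False
    define y where "y = (1 / norm x) *\<^sub>R x"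
    have "y \<in> sphere 0 1" using False by (simp add: y_def)
    then have "(norm (A *v y))^2 \<le> \<mu>0" using mx \<mu>0_def by simp
    moreover have "A *v y = (1 / norm x) *\<^sub>R (A *v x)" by (simp add: y_def matrix_vector_mult_scaleR)
    ultimately have "(norm (A *v x))^2 / (norm x)^2 \<le> \<mu>0"
      by (simp add: power_divide)
    then show ?thesis using False by (simp add: field_simps)
  qed simp
  have eig: "B *v x0 = \<mu>0 *\<^sub>R x0"
  proof -
    define w where "w = \<mu>0 *\<^sub>R x0 - B *v x0"
    define W where "W = w \<bullet> w"
    define C where "C = \<mu>0 * (w \<bullet> w) - (A *v w) \<bullet> (A *v w)"
    have C0: "C \<ge> 0" using all[of w] by (simp add: C_def power2_norm_eq_inner)
    have key: "2 * s * W \<le> s^2 * C" if "s > 0" for s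
    proof -
      have "(norm (A *v (x0 - s *\<^sub>R w)))^2 \<le> \<mu>0 * (norm (x0 - s *\<^sub>R w))^2" by (rule all)
      moreover have "(norm (A *v (x0 - s *\<^sub>R w)))^2 = \<mu>0 - 2 * s * ((A *v x0) \<bullet> (A *v w)) + s^2 * ((A *v w) \<bullet> (A *v w))"
        using nsq[of "A *v x0" s "A *v w"] by (simp add: matrix_vector_mult_diff_distrib matrix_vector_mult_scaleR \<mu>0_def dot_square_norm)
      moreover have "(norm (x0 - s *\<^sub>R w))^2 = 1 - 2 * s * (x0 \<bullet> w) + s^2 * (w \<bullet> w)"
        using nsq[of x0 s w] n0 by (simp add: dot_square_norm)
      moreover have "(A *v x0) \<bullet> (A *v w) = \<mu>0 * (x0 \<bullet> w) - W"
      proof -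
        have "(A *v x0) \<bullet> (A *v w) = (B *v x0) \<bullet> w" by (simp add: Bin)
        also have "B *v x0 = \<mu>0 *\<^sub>R x0 - w" by (simp add: w_def)
        finally show ?thesis by (simp add: W_def inner_diff_left)
      qed
      ultimately have "\<mu>0 - 2 * s * (\<mu>0 * (x0 \<bullet> w) - W) + s^2 * ((A *v w) \<bullet> (A *v w)) \<le> \<mu>0 * (1 - 2 * s * (x0 \<bullet> w) + s^2 * (w \<bullet> w))"
        by simp
      then show ?thesis by (simp add: C_def algebra_simps)
    qed
    have "W \<le> 0"
    proof (rule ccontr)
      assume "\<not> W \<le> 0"
      then have W: "W > 0" by simp
      define s where "s = W / (C + 1)"
      have s: "s > 0" using W C0 by (simp add: s_def)
      have "2 * s * W \<le> s^2 * C" by (rule key[OF s])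
      then have "2 * W \<le> s * C" using s by (simp add: power2_eq_square)
      also have "s * C = W * (C / (C + 1))" by (simp add: s_def)
      also have "\<dots> \<le> W * 1" using W C0 by (intro mult_left_mono) auto
      finally show False using W by simp
    qed
    then have "w = 0" unfolding W_def by (metis inner_eq_zero_iff inner_ge_zero antisym)
    then show ?thesis by (simp add: w_def)
  qed
  have "\<mu>0 \<in> E" unfolding E_def using eig n0 by (intro CollectI exI[of _ x0]) auto
  then have le: "\<mu>0 \<le> Max E" using finE by simp
  have mu0: "\<mu>0 \<ge> 0" by (simp add: \<mu>0_def)
  have "sigma_max A = sqrt (Max E)" by (simp add: sigma_max_def E_def B_def)
  then have "sqrt \<mu>0 \<le> c" using assms le by (metis order.trans real_sqrt_le_mono)
  moreover have "norm (A *v x) \<le> sqrt \<mu>0 * norm x"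
  proof -
    have "sqrt ((norm (A *v x))^2) \<le> sqrt (\<mu>0 * (norm x)^2)" using all[of x] by (rule real_sqrt_le_mono)
    then show ?thesis by (simp add: real_sqrt_mult)
  qed
  ultimately show ?thesis by (meson mult_right_mono norm_ge_zero order.trans)
qed

lemma cont_matrix:
  fixes L :: "'x::topological_space \<Rightarrow> real^'n \<Rightarrow> real^'m"
  assumes "\<And>h. continuous_on S (\<lambda>x. L x h)"
  shows "continuous_on S (\<lambda>x. matrix (L x))"
  unfolding matrix_def
  by (intro continuous_on_vec_lambda continuous_on_component assms)

lemma cont_mv:
  fixes E :: "'x::topological_space \<Rightarrow> real^'n^'m"
  assumes "continuous_on S E"
  shows "continuous_on S (\<lambda>x. E x *v z)"
  unfolding matrix_vector_mult_def
  by (intro continuous_intros assms)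

lemma C1_mapI:
  fixes g :: "real^'n \<Rightarrow> real^'m"
  assumes d: "\<And>x. (g has_derivative L x) (at x)"
    and c: "\<And>h. continuous_on UNIV (\<lambda>x. L x h)"
  shows "C1_map g"
proof -
  have "jacobian g (at x) = matrix (L x)" for x
    unfolding jacobian_def using frechet_derivative_at[OF d[of x]] by simp
  then have "(\<lambda>x. jacobian g (at x)) = (\<lambda>x. matrix (L x))" by auto
  moreover have "continuous_on UNIV (\<lambda>x. matrix (L x))" by (rule cont_matrix[OF c])
  moreover have "g differentiable (at x)" for x using d[of x] by (auto simp: differentiable_def)
  ultimately show ?thesis unfolding C1_map_def by metis
qed

lemma matrix_inv_props:
  fixes A :: "real^'n^'n"
  assumes "invertible A"
  shows "A ** matrix_inv A = mat 1" "matrix_inv A ** A = mat 1"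
proof -
  have "\<exists>A'. A ** A' = mat 1 \<and> A' ** A = mat 1" using assms by (simp add: invertible_def)
  then have "A ** matrix_inv A = mat 1 \<and> matrix_inv A ** A = mat 1"
    unfolding matrix_inv_def by (rule someI_ex)
  then show "A ** matrix_inv A = mat 1" "matrix_inv A ** A = mat 1" by auto
qed

lemma invertible_of_inj:
  fixes A :: "real^'n^'n"
  assumes "\<And>h. A *v h = 0 \<Longrightarrow> h = 0"
  shows "invertible A"
proof -
  have "inj ((*v) A)"
  proof (rule injI)
    fix x y assume "A *v x = A *v y"
    then have "A *v (x - y) = 0" by (simp add: matrix_vector_mult_diff_distrib)
    then show "x = y" using assms[of "x - y"] by simp
  qed
  then show ?thesis using matrix_left_invertible_injective invertible_left_inverse by blast
qed

lemma abstract_diffeo: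
  fixes f :: "real^'r \<Rightarrow> real^'r" and L :: "real^'r \<Rightarrow> real^'r \<Rightarrow> real^'r"
    and M Mi :: "real^'r^'r"
  assumes deriv: "\<And>x. (f has_derivative L x) (at x)"
    and Lcont: "\<And>h. continuous_on UNIV (\<lambda>x. L x h)"
    and MM: "M ** Mi = mat 1"
    and lip: "\<And>u v. norm (Mi *v (f u - f v) - (u - v)) \<le> c * norm (u - v)"
    and c: "0 \<le> c" "c < 1"
  shows "C1_diffeomorphism f"
proof -
  obtain K where K: "K > 0" "\<And>z. norm (Mi *v z) \<le> norm z * K"
    using bounded_linear.pos_bounded[OF matrix_vector_mul_bounded_linear[of Mi]] by blast
  have Mz: "M *v (Mi *v z) = z" for z by (simp add: matrix_vector_mul_assoc MM)
  have inj: "inj f"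
  proof (rule injI)
    fix u v assume "f u = f v"
    then have "norm (u - v) \<le> c * norm (u - v)" using lip[of u v] by (simp add: norm_minus_commute)
    then show "u = v" using c by (metis mult_le_cancel_right1 norm_ge_zero not_less order_le_less_trans eq_iff_diff_eq_0 norm_le_zero_iff)
  qed
  have surj: "surj f"
  proof -
    have "\<exists>u. f u = z" for z
    proof -
      define T where "T u = u - Mi *v (f u - z)" for u
      have "\<forall>x y. dist (T x) (T y) \<le> c * dist x y"
      proof (intro allI)
        fix x y
        have "T x - T y = -(Mi *v (f x - f y) - (x - y))"
          by (simp add: T_def matrix_vector_mult_diff_distrib algebra_simps)
        then show "dist (T x) (T y) \<le> c * dist x y"
          using lip[of x y] by (simp add: dist_norm norm_minus_commute[of "x - y"])
      qed
      then obtain u where "T u = u" using banach_fix_type[OF c] by blast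
      then have "Mi *v (f u - z) = 0" by (simp add: T_def)
      then have "M *v (Mi *v (f u - z)) = 0" by simp
      then have "f u - z = 0" using Mz by simp
      then show ?thesis by auto
    qed
    then show ?thesis by (metis surjI)
  qed
  have bij: "bij f" using inj surj by (simp add: bij_def)
  define g where "g = inv f"
  have fg: "f (g y) = y" for y using surj by (simp add: g_def surj_f_inv_f)
  have gf: "g (f x) = x" for x using inj by (simp add: g_def inv_f_f)
  have glip: "norm (g a - g b) \<le> (K / (1 - c)) * norm (a - b)" for a b
  proof -
    let ?u = "g a" and ?v = "g b"
    have "norm (?u - ?v) - norm (Mi *v (a - b)) \<le> norm (Mi *v (f ?u - f ?v) - (?u - ?v))"
      using fg[of a] fg[of b] norm_triangle_ineq2[of "?u - ?v" "Mi *v (a - b)"]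
      by (simp add: norm_minus_commute)
    also have "\<dots> \<le> c * norm (?u - ?v)" by (rule lip)
    finally have "(1 - c) * norm (?u - ?v) \<le> norm (Mi *v (a - b))" by (simp add: algebra_simps)
    also have "\<dots> \<le> norm (a - b) * K" by (rule K(2))
    finally show ?thesis using c by (simp add: field_simps)
  qed
  have gcont: "isCont g y" for y
  proof -
    have "((\<lambda>x. x - y) \<longlongrightarrow> 0) (at y)" by (intro LIM_zero tendsto_ident_at)
    then have "((\<lambda>x. g x - g y) \<longlongrightarrow> 0) (at y)"
      by (rule tendsto_0_le[where K="K / (1 - c)"], intro always_eventually allI) (metis glip mult.commute)
    then show ?thesis unfolding isCont_def by (rule LIM_zero_cancel)
  qed
  define D where "D x = matrix (L x)" for x
  have blL: "bounded_linear (L x)" for x using deriv[of x] by (rule has_derivative_bounded_linear)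
  have LD: "L x h = D x *v h" for x h
    using matrix_vector_mul(3)[OF blL[of x]] unfolding D_def by metis
  have Dbound: "norm (Mi *v (D x *v h) - h) \<le> c * norm h" for x h
  proof (cases "h = 0")
    case False
    have nh: "norm h > 0" using False by simp
    show ?thesis
    proof (rule field_le_epsilon)
      fix e :: real assume e: "e > 0"
      define e' where "e' = e / (K * norm h)"
      have e': "e' > 0" using e K nh by (simp add: e'_def)
      obtain d where d: "d > 0" "\<And>y. norm (y - x) < d \<Longrightarrow> norm (f y - f x - L x (y - x)) \<le> e' * norm (y - x)"
        using deriv[of x] e' unfolding has_derivative_at_alt by blast
      define t where "t = d / (2 * norm h)"
      have t: "t > 0" using d nh by (simp add: t_def)
      have tn: "norm (t *\<^sub>R h) < d" using d nh t by (simp add: t_def)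
      define y where "y = x + t *\<^sub>R h"
      have r: "norm (f y - f x - L x (t *\<^sub>R h)) \<le> e' * norm (t *\<^sub>R h)" using d(2)[of y] tn by (simp add: y_def)
      have "Mi *v (D x *v (t *\<^sub>R h)) - t *\<^sub>R h = (Mi *v (f y - f x) - (y - x)) - Mi *v (f y - f x - L x (t *\<^sub>R h))"
        by (simp add: y_def LD matrix_vector_mult_diff_distrib algebra_simps)
      then have "norm (Mi *v (D x *v (t *\<^sub>R h)) - t *\<^sub>R h) \<le> c * norm (y - x) + norm (f y - f x - L x (t *\<^sub>R h)) * K"
        using lip[of y x] K(2)[of "f y - f x - L x (t *\<^sub>R h)"] norm_triangle_ineq4 by (smt (verit))
      also have "\<dots> \<le> c * (t * norm h) + e' * (t * norm h) * K"
        using r K t by (simp add: y_def mult_right_mono)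
      finally have H: "norm (Mi *v (D x *v (t *\<^sub>R h)) - t *\<^sub>R h) \<le> t * (c * norm h + e' * norm h * K)"
        by (simp add: algebra_simps)
      have eqn: "norm (Mi *v (D x *v (t *\<^sub>R h)) - t *\<^sub>R h) = t * norm (Mi *v (D x *v h) - h)"
        using t by (simp add: matrix_vector_mult_scaleR flip: scaleR_diff_right)
      have "norm (Mi *v (D x *v h) - h) \<le> c * norm h + e' * norm h * K"
        using H t unfolding eqn by simp
      also have "e' * norm h * K = e" using K nh by (simp add: e'_def)
      finally show "norm (Mi *v (D x *v h) - h) \<le> c * norm h + e" .
    qed
  qed simp
  have Dinj: "D x *v h = 0 \<Longrightarrow> h = 0" for x h
  proof -
    assume "D x *v h = 0"
    then have "norm h \<le> c * norm h" using Dbound[of x h] by simp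
    then show "h = 0" using c by (metis mult_le_cancel_right1 norm_ge_zero not_less order_le_less_trans norm_le_zero_iff)
  qed
  have Dinv: "invertible (D x)" for x by (rule invertible_of_inj) (rule Dinj)
  define Di where "Di x = matrix_inv (D x)" for x
  have DDi: "D x ** Di x = mat 1" "Di x ** D x = mat 1" for x
    using matrix_inv_props[OF Dinv[of x]] by (auto simp: Di_def)
  have Dibound: "norm (Di x *v z) \<le> (K / (1 - c)) * norm z" for x z
  proof -
    let ?h = "Di x *v z"
    have "D x *v ?h = z" by (simp add: matrix_vector_mul_assoc DDi)
    then have "norm (Mi *v z - ?h) \<le> c * norm ?h" using Dbound[of x ?h] by simp
    then have "norm ?h - norm (Mi *v z) \<le> c * norm ?h" using norm_triangle_ineq2[of ?h "Mi *v z"]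
      by (simp add: norm_minus_commute)
    then have "(1 - c) * norm ?h \<le> norm (Mi *v z)" by (simp add: algebra_simps)
    also have "\<dots> \<le> norm z * K" by (rule K(2))
    finally show ?thesis using c by (simp add: field_simps)
  qed
  have gderiv: "(g has_derivative (\<lambda>z. Di (g y) *v z)) (at y)" for y
  proof (rule has_derivative_inverse_basic[where f=f and f'="\<lambda>h. D (g y) *v h" and T=UNIV])
    show "(f has_derivative (\<lambda>h. D (g y) *v h)) (at (g y))"
      using deriv[of "g y"] by (simp add: LD[abs_def])
    show "bounded_linear ((*v) (Di (g y)))" by simp
    show "(*v) (Di (g y)) \<circ> (\<lambda>h. D (g y) *v h) = id"
      by (auto simp: matrix_vector_mul_assoc DDi)
    show "continuous (at y) g" by (rule gcont)
  qed (auto simp: fg)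
  have Econt: "continuous_on UNIV (\<lambda>y. D (g y))"
  proof -
    have "continuous_on UNIV D" unfolding D_def by (rule cont_matrix[OF Lcont])
    moreover have "continuous_on UNIV g" by (simp add: continuous_at_imp_continuous_on gcont)
    ultimately show ?thesis using continuous_on_compose[of UNIV g D] by (simp add: o_def continuous_on_subset)
  qed
  have gLcont: "continuous_on UNIV (\<lambda>y. Di (g y) *v z)" for z
  proof (rule continuous_at_imp_continuous_on, intro ballI)
    fix y0 :: "real^'r" 
    define z0 where "z0 = Di (g y0) *v z"
    have Ez0: "D (g y0) *v z0 = z" by (simp add: z0_def matrix_vector_mul_assoc DDi)
    have "isCont (\<lambda>y. D (g y) *v z0) y0" using cont_mv[OF Econt, of z0]
      by (simp add: continuous_on_eq_continuous_at)
    then have "((\<lambda>y. D (g y) *v z0 - D (g y0) *v z0) \<longlongrightarrow> 0) (at y0)"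
      unfolding isCont_def by (rule LIM_zero)
    then have "((\<lambda>y. Di (g y) *v z - z0) \<longlongrightarrow> 0) (at y0)"
    proof (rule tendsto_0_le[where K="K / (1 - c)"], intro always_eventually allI)
      fix y
      have "Di (g y) *v z - z0 = Di (g y) *v (z - D (g y) *v z0)"
        by (simp add: matrix_vector_mult_diff_distrib matrix_vector_mul_assoc DDi)
      also have "z - D (g y) *v z0 = D (g y0) *v z0 - D (g y) *v z0" by (simp add: Ez0)
      finally have "norm (Di (g y) *v z - z0) = norm (Di (g y) *v (D (g y0) *v z0 - D (g y) *v z0))"
        by simp
      also have "\<dots> \<le> (K / (1 - c)) * norm (D (g y0) *v z0 - D (g y) *v z0)" by (rule Dibound)
      also have "norm (D (g y0) *v z0 - D (g y) *v z0) = norm (D (g y) *v z0 - D (g y0) *v z0)"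
        by (rule norm_minus_commute)
      finally show "norm (Di (g y) *v z - z0) \<le> norm (D (g y) *v z0 - D (g y0) *v z0) * (K / (1 - c))"
        by (simp add: mult.commute)
    qed
    then show "isCont (\<lambda>y. Di (g y) *v z) y0" unfolding isCont_def z0_def by (rule LIM_zero_cancel)
  qed
  have "C1_map f" by (rule C1_mapI[OF deriv Lcont])
  moreover have "C1_map g" by (rule C1_mapI[OF gderiv gLcont])
  ultimately show ?thesis using bij by (simp add: C1_diffeomorphism_def g_def)
qed

lemma sym_pos_invertible:
  fixes P :: "real^'n^'n"
  assumes "sym_pos_def P"
  shows "invertible P"
proof (rule invertible_of_inj)
  fix h assume "P *v h = 0"
  then have "h \<bullet> (P *v h) = 0" by simp
  then show "h = 0" using assms unfolding sym_pos_def_def by (metis less_irrefl)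
qed

lemma mvs: "(k *\<^sub>R A) *v v = k *\<^sub>R (A *v v)" for A :: "real^'m^'n"
  by (simp add: scaleR_matrix_vector_assoc)

lemma scale_solve: "k \<noteq> 0 \<Longrightarrow> k *\<^sub>R Z = w \<Longrightarrow> Z = (1/k) *\<^sub>R (w::'a::real_vector)"
  by auto

lemma YJX:
  fixes lam \<delta> :: real and P :: "real^'n^'n" and Sig :: "real^'m^'m"
    and Jm :: "real^'n^'m" and Y :: "real^'r^'m" and S :: "real^'r^'r" and X :: "real^'r^'n"
  assumes "lam > 0" "\<delta> > 0" "sym_pos_def P" "sym_pos_def Sig"
    and gsvd: "(lam / \<delta>) *\<^sub>R (matrix_inv Sig ** Jm ** matrix_inv P) = Y ** S ** transpose X"
    and Y_orth: "transpose Y ** ((1 / lam) *\<^sub>R Sig) ** Y = mat 1"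
    and X_orth: "transpose X ** (\<delta> *\<^sub>R P) ** X = mat 1"
  shows "transpose Y ** Jm ** X = S"
proof -
  have SS: "Sig *v (matrix_inv Sig *v z) = z" for z
    using matrix_inv_props[OF sym_pos_invertible[OF assms(4)]] by (simp add: matrix_vector_mul_assoc)
  have PP: "matrix_inv P *v (P *v z) = z" for z
    using matrix_inv_props[OF sym_pos_invertible[OF assms(3)]] by (simp add: matrix_vector_mul_assoc)
  have g: "(lam / \<delta>) *\<^sub>R (matrix_inv Sig *v (Jm *v (matrix_inv P *v v))) = Y *v (S *v (transpose X *v v))" for v
    using arg_cong[OF gsvd, of "\<lambda>A. A *v v"] by (simp add: mvs del: transpose_matrix_vector flip: matrix_vector_mul_assoc)
  have J: "Jm *v k = (\<delta> / lam) *\<^sub>R (Sig *v (Y *v (S *v (transpose X *v (P *v k)))))" for k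
  proof -
    have "(lam / \<delta>) *\<^sub>R (matrix_inv Sig *v (Jm *v k)) = Y *v (S *v (transpose X *v (P *v k)))"
      using g[of "P *v k"] by (simp add: PP del: transpose_matrix_vector)
    then have "Sig *v ((lam / \<delta>) *\<^sub>R (matrix_inv Sig *v (Jm *v k))) = Sig *v (Y *v (S *v (transpose X *v (P *v k))))"
      by simp
    then have "(lam / \<delta>) *\<^sub>R (Jm *v k) = Sig *v (Y *v (S *v (transpose X *v (P *v k))))"
      by (simp add: matrix_vector_mult_scaleR SS)
    then have "(\<delta>/lam) *\<^sub>R ((lam / \<delta>) *\<^sub>R (Jm *v k)) = (\<delta>/lam) *\<^sub>R (Sig *v (Y *v (S *v (transpose X *v (P *v k)))))"
      by (simp only:)
    moreover have "(\<delta>/lam) *\<^sub>R ((lam / \<delta>) *\<^sub>R (Jm *v k)) = Jm *v k" using assms(1,2) by simp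
    ultimately show ?thesis by simp
  qed
  have YY: "transpose Y *v (Sig *v (Y *v w)) = lam *\<^sub>R w" for w
  proof -
    have "transpose Y *v (((1 / lam) *\<^sub>R Sig) *v (Y *v w)) = w"
      using arg_cong[OF Y_orth, of "\<lambda>A. A *v w"] by (simp del: transpose_matrix_vector flip: matrix_vector_mul_assoc)
    then have "(1 / lam) *\<^sub>R (transpose Y *v (Sig *v (Y *v w))) = w"
      by (simp only: mvs matrix_vector_mult_scaleR)
    then have "transpose Y *v (Sig *v (Y *v w)) = (1 / (1 / lam)) *\<^sub>R w"
      by (rule scale_solve[rotated]) (use assms(1) in simp)
    then show ?thesis by simp
  qed
  have XX: "transpose X *v (P *v (X *v w)) = (1 / \<delta>) *\<^sub>R w" for w
  proof -
    have "transpose X *v ((\<delta> *\<^sub>R P) *v (X *v w)) = w"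
      using arg_cong[OF X_orth, of "\<lambda>A. A *v w"] by (simp del: transpose_matrix_vector flip: matrix_vector_mul_assoc)
    then have "\<delta> *\<^sub>R (transpose X *v (P *v (X *v w))) = w"
      by (simp only: mvs matrix_vector_mult_scaleR)
    then show ?thesis
      by (rule scale_solve[rotated]) (use assms(2) in simp)
  qed
  show ?thesis
  proof (subst matrix_eq, intro allI)
    fix h
    have "(transpose Y ** Jm ** X) *v h = transpose Y *v (Jm *v (X *v h))" by (simp del: transpose_matrix_vector flip: matrix_vector_mul_assoc)
    also have "\<dots> = (\<delta> / lam) *\<^sub>R (transpose Y *v (Sig *v (Y *v (S *v (transpose X *v (P *v (X *v h)))))))"
      by (simp add: J matrix_vector_mult_scaleR del: transpose_matrix_vector)
    also have "\<dots> = S *v h" using assms(1,2) by (simp add: YY XX matrix_vector_mult_scaleR del: transpose_matrix_vector)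
    finally show "(transpose Y ** Jm ** X) *v h = S *v h" .
  qed
qed

lemma mv_deriv:
  fixes A :: "real^'n^'m"
  shows "(g has_derivative g') F \<Longrightarrow> ((\<lambda>x. A *v g x) has_derivative (\<lambda>h. A *v g' h)) F"
  by (rule bounded_linear.has_derivative[OF matrix_vector_mul_bounded_linear])

lemma cont_mv2:
  fixes E :: "'x::topological_space \<Rightarrow> real^'n^'m"
  assumes "continuous_on S E" "continuous_on S v"
  shows "continuous_on S (\<lambda>x. E x *v v x)"
  unfolding matrix_vector_mult_def
  by (intro continuous_intros assms)

lemma diag_transpose: "diagonal_mat S \<Longrightarrow> transpose S = S"
  by (auto simp: diagonal_mat_def transpose_def vec_eq_iff) metis

theorem proposition3p5:
  fixes lam \<delta> :: real
    and P :: "real^'n^'n" and Sig :: "real^'m^'m"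
    and mu :: "real^'n" and y :: "real^'m"
    and F :: "real^'n \<Rightarrow> real^'m" and J :: "real^'n \<Rightarrow> real^'n^'m"
    and us :: "real^'n"
    and Y :: "real^'r^'m" and S :: "real^'r^'r" and X :: "real^'r^'n"
    and \<epsilon> et \<tau> :: real
  assumes "lam > 0" and "\<delta> > 0"
    and "sym_pos_def P" and "sym_pos_def Sig"
    and F_deriv: "\<And>u. (F has_derivative (\<lambda>h. J u *v h)) (at u)"
    and J_cont: "continuous_on UNIV J"
    and rank_r: "rank (J us) = CARD('r)"
    and gsvd: "(lam / \<delta>) *\<^sub>R (matrix_inv Sig ** J us ** matrix_inv P) = Y ** S ** transpose X"
    and S_diag: "diagonal_mat S"
    and Y_orth: "transpose Y ** ((1 / lam) *\<^sub>R Sig) ** Y = mat 1"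
    and X_orth: "transpose X ** (\<delta> *\<^sub>R P) ** X = mat 1"
    and eps_pos: "\<epsilon> > 0"
    and contraction:
      "\<exists>c < 1. \<forall>ur up.
         dist ur (transpose X ** (\<delta> *\<^sub>R P) *v (us - mu)) < \<epsilon> \<longrightarrow>
         up \<in> range (\<lambda>v. (mat 1 - X ** transpose X ** (\<delta> *\<^sub>R P)) *v v) \<longrightarrow>
         sigma_max (matrix_inv (mat 1 + S ** S) **
            jacobian (\<lambda>w. (S ** transpose Y) *v
               (F (X *v w + up + mu) - J us *v (X *v w + up + mu - us) - F us)) (at ur)) \<le> c"
    and "et > 0" and "et \<le> \<epsilon>"
    and "0 < \<tau>" and "\<tau> < 1"
  shows "\<forall>up \<in> range (\<lambda>v. (mat 1 - X ** transpose X ** (\<delta> *\<^sub>R P)) *v v).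
    C1_diffeomorphism (\<lambda>ur.
       (ur + (S ** transpose Y) *v (F us + J us *v (X *v ur + up + mu - us) - y))
     + (S ** transpose Y) *v
         (F (X *v Psi_map et \<tau> (transpose X ** (\<delta> *\<^sub>R P) *v (us - mu)) ur + up + mu)
          - J us *v (X *v Psi_map et \<tau> (transpose X ** (\<delta> *\<^sub>R P) *v (us - mu)) ur + up + mu - us)
          - F us))"
proof (intro ballI)
  fix up assume up: "up \<in> range (\<lambda>v. (mat 1 - X ** transpose X ** (\<delta> *\<^sub>R P)) *v v)"
  define mr where "mr = transpose X ** (\<delta> *\<^sub>R P) *v (us - mu)"
  obtain c where c: "c < 1" and cb: "\<And>ur. dist ur mr < \<epsilon> \<Longrightarrow>
         sigma_max (matrix_inv (mat 1 + S ** S) **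
            jacobian (\<lambda>w. (S ** transpose Y) *v
               (F (X *v w + up + mu) - J us *v (X *v w + up + mu - us) - F us)) (at ur)) \<le> c"
    using contraction up unfolding mr_def by blast
  define c0 where "c0 = max c 0"
  have c0: "0 \<le> c0" "c0 < 1" "c \<le> c0" using c by (auto simp: c0_def)
  interpret psiloc et \<tau> by unfold_locales (use assms in auto)
  define SY where "SY = S ** transpose Y"
  define R where "R w = SY *v (F (X *v w + up + mu) - J us *v (X *v w + up + mu - us) - F us)" for w
  define DR where "DR w k = SY *v (J (X *v w + up + mu) *v (X *v k) - J us *v (X *v k))" for w k
  define Psi where "Psi u = mr + phi (u - mr)" for u :: "real^'r"
  define M where "M = mat 1 + S ** S"
  define Mi where "Mi = matrix_inv M"
  have Psi_eq: "Psi_map et \<tau> mr u = Psi u" for u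
    by (cases "u = mr") (auto simp: Psi_map_def Psi_def phi_def rho_def)
  have YJX': "transpose Y ** J us ** X = S" by (rule YJX) (use assms in auto)
  have SYJX: "SY *v (J us *v (X *v k)) = S *v (S *v k)" for k
  proof -
    have "SY *v (J us *v (X *v k)) = S *v ((transpose Y ** J us ** X) *v k)"
      by (simp add: SY_def matrix_vector_mul_assoc matrix_mul_assoc del: transpose_matrix_vector)
    then show ?thesis using YJX' by simp
  qed
  have ST: "transpose S = S" by (rule diag_transpose[OF S_diag])
  have Minj: "M *v h = 0 \<Longrightarrow> h = 0" for h
  proof -
    assume "M *v h = 0"
    then have "h + S *v (S *v h) = 0" by (simp add: M_def matrix_vector_mult_add_rdistrib matrix_vector_mul_assoc)
    then have "h \<bullet> (h + S *v (S *v h)) = 0" by simp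
    moreover have "h \<bullet> (S *v (S *v h)) = (S *v h) \<bullet> (S *v h)"
      using transpose_inner[of S h "S *v h"] ST by simp
    ultimately have "h \<bullet> h + (S *v h) \<bullet> (S *v h) = 0" by (simp add: inner_add_right)
    then have "h \<bullet> h = 0" by (metis add_nonneg_eq_0_iff inner_ge_zero)
    then show "h = 0" by simp
  qed
  have Minv: "invertible M" by (rule invertible_of_inj[OF Minj])
  have MMi: "M ** Mi = mat 1" "Mi ** M = mat 1" using matrix_inv_props[OF Minv] by (auto simp: Mi_def)
  have Rd: "(R has_derivative DR w) (at w)" for w
  proof -
    have a: "((\<lambda>w. X *v w + up + mu) has_derivative (\<lambda>k. X *v k)) (at w)"
      by (intro has_derivative_add_const mv_deriv has_derivative_ident)
    have b: "((\<lambda>w. F (X *v w + up + mu)) has_derivative (\<lambda>k. J (X *v w + up + mu) *v (X *v k))) (at w)"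
      using has_derivative_compose[OF a F_deriv] .
    have a2: "((\<lambda>w. X *v w + up + mu - us) has_derivative (\<lambda>k. X *v k)) (at w)"
      using has_derivative_diff[OF a has_derivative_const[of us]] by simp
    have d: "((\<lambda>w. J us *v (X *v w + up + mu - us)) has_derivative (\<lambda>k. J us *v (X *v k))) (at w)"
      by (rule mv_deriv[OF a2])
    have "((\<lambda>w. F (X *v w + up + mu) - J us *v (X *v w + up + mu - us) - F us) has_derivative
           (\<lambda>k. J (X *v w + up + mu) *v (X *v k) - J us *v (X *v k))) (at w)"
      using has_derivative_diff[OF has_derivative_diff[OF b d] has_derivative_const[of "F us"]] by simp
    then show ?thesis unfolding R_def[abs_def] DR_def by (rule mv_deriv)
  qed
  have phid: "((\<lambda>u. phi (u - mr)) has_derivative Dphi (u - mr)) (at u)" for u :: "real^'r"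
  proof -
    have "((\<lambda>u. u - mr) has_derivative (\<lambda>h. h)) (at u)"
      using has_derivative_diff[OF has_derivative_ident has_derivative_const[of mr]] by simp
    from has_derivative_compose[OF this phi_deriv] show ?thesis .
  qed
  have Psid: "(Psi has_derivative Dphi (u - mr)) (at u)" for u
    unfolding Psi_def[abs_def] using has_derivative_add[OF has_derivative_const[of mr] phid[of u]] by simp
  have RPsid: "((\<lambda>u. R (Psi u)) has_derivative (\<lambda>h. DR (Psi u) (Dphi (u - mr) h))) (at u)" for u
    using has_derivative_compose[OF Psid Rd] .
  define L where "L u h = h + SY *v (J us *v (X *v h)) + DR (Psi u) (Dphi (u - mr) h)" for u h
  define f where "f u = (u + SY *v (F us + J us *v (X *v u + up + mu - us) - y)) + R (Psi u)" for u
  have fd: "(f has_derivative L u) (at u)" for u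
  proof -
    have a: "((\<lambda>u. X *v u + up + mu - us) has_derivative (\<lambda>k. X *v k)) (at u)"
      using has_derivative_diff[OF has_derivative_add_const[OF has_derivative_add_const[OF mv_deriv[OF has_derivative_ident]]] has_derivative_const[of us]]
      by simp
    have "((\<lambda>u. F us + J us *v (X *v u + up + mu - us) - y) has_derivative (\<lambda>k. J us *v (X *v k))) (at u)"
      using has_derivative_diff[OF has_derivative_add[OF has_derivative_const[of "F us"] mv_deriv[OF a]] has_derivative_const[of y]]
      by simp
    then have "((\<lambda>u. u + SY *v (F us + J us *v (X *v u + up + mu - us) - y)) has_derivative (\<lambda>h. h + SY *v (J us *v (X *v h)))) (at u)"
      by (intro has_derivative_add has_derivative_ident mv_deriv)
    from has_derivative_add[OF this RPsid[of u]] show ?thesis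
      unfolding f_def[abs_def] L_def[abs_def] by simp
  qed
  have Psic: "continuous_on UNIV Psi" by (rule has_derivative_continuous_on) (use Psid in \<open>auto intro: has_derivative_at_withinI\<close>)
  have Dpc: "continuous_on UNIV (\<lambda>u. Dphi (u - mr) h)" for h
  proof (rule continuous_at_imp_continuous_on, intro ballI)
    fix u :: "real^'r"
    have "isCont (\<lambda>u. u - mr) u" by (intro continuous_intros)
    from continuous_at_compose[OF this Dphi_cont[of "u - mr" h]] show "isCont (\<lambda>u. Dphi (u - mr) h) u"
      by (simp add: o_def)
  qed
  have Jc: "continuous_on UNIV (\<lambda>u. J (X *v Psi u + up + mu))"
  proof -
    have "continuous_on UNIV (\<lambda>u. X *v Psi u + up + mu)"
      by (intro continuous_intros cont_mv2 Psic)
    then show ?thesis using continuous_on_compose[of UNIV "\<lambda>u. X *v Psi u + up + mu" J] J_cont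
      by (simp add: o_def continuous_on_subset)
  qed
  have Lc: "continuous_on UNIV (\<lambda>u. L u h)" for h
    unfolding L_def DR_def
    by (intro continuous_intros cont_mv2 Jc Dpc)
  have Rc: "continuous_on UNIV R" by (rule has_derivative_continuous_on) (use Rd in \<open>auto intro: has_derivative_at_withinI\<close>)
  have Req: "R = (\<lambda>w. (S ** transpose Y) *v (F (X *v w + up + mu) - J us *v (X *v w + up + mu - us) - F us))"
    by (simp add: R_def[abs_def] SY_def)
  have DRbound: "norm (Mi *v DR w k) \<le> c0 * norm k" if "w \<in> ball mr \<epsilon>" for w k
  proof -
    have "dist w mr < \<epsilon>" using that by (simp add: dist_commute)
    then have "sigma_max (Mi ** jacobian R (at w)) \<le> c" using cb[of w] by (simp add: Req Mi_def M_def)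
    moreover have "jacobian R (at w) = matrix (DR w)"
      unfolding jacobian_def using frechet_derivative_at[OF Rd[of w]] by simp
    ultimately have "sigma_max (Mi ** matrix (DR w)) \<le> c" by simp
    then have "norm ((Mi ** matrix (DR w)) *v k) \<le> c * norm k" by (rule sigma_max_bound)
    moreover have "(Mi ** matrix (DR w)) *v k = Mi *v DR w k"
      using matrix_vector_mul(3)[OF has_derivative_bounded_linear[OF Rd[of w]]]
      by (metis matrix_vector_mul_assoc)
    ultimately show ?thesis using c0 by (metis mult_right_mono norm_ge_zero order.trans)
  qed
  have Rlip_ball: "norm (Mi *v (R a - R b)) \<le> c0 * norm (a - b)" if "a \<in> ball mr \<epsilon>" "b \<in> ball mr \<epsilon>" for a b
  proof -
    have "norm (Mi *v R a - Mi *v R b) \<le> c0 * norm (a - b)"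
    proof (rule differentiable_bound[where f'="\<lambda>w k. Mi *v DR w k"])
      show "convex (ball mr \<epsilon>)" by simp
      show "((\<lambda>w. Mi *v R w) has_derivative (\<lambda>k. Mi *v DR x k)) (at x within ball mr \<epsilon>)" for x
        by (rule has_derivative_at_withinI, rule mv_deriv, rule Rd)
      show "onorm (\<lambda>k. Mi *v DR x k) \<le> c0" if "x \<in> ball mr \<epsilon>" for x
        by (rule onorm_le) (rule DRbound[OF that])
    qed (use that in auto)
    then show ?thesis by (simp add: matrix_vector_mult_diff_distrib)
  qed
  have clb: "cball mr \<epsilon> = closure (ball mr \<epsilon>)" using eps_pos by simp
  have Rlip1: "norm (Mi *v (R a - R b)) \<le> c0 * norm (a - b)" if "a \<in> cball mr \<epsilon>" "b \<in> ball mr \<epsilon>" for a b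
  proof -
    have "closed {a. norm (Mi *v (R a - R b)) \<le> c0 * norm (a - b)}"
      by (intro closed_Collect_le continuous_intros cont_mv2 Rc)
    moreover have "ball mr \<epsilon> \<subseteq> {a. norm (Mi *v (R a - R b)) \<le> c0 * norm (a - b)}"
      using Rlip_ball that(2) by auto
    ultimately have "closure (ball mr \<epsilon>) \<subseteq> {a. norm (Mi *v (R a - R b)) \<le> c0 * norm (a - b)}"
      by (rule closure_minimal[rotated])
    then show ?thesis using that(1) clb by auto
  qed
  have Rlip: "norm (Mi *v (R a - R b)) \<le> c0 * norm (a - b)" if "a \<in> cball mr \<epsilon>" "b \<in> cball mr \<epsilon>" for a b
  proof -
    have "closed {b. norm (Mi *v (R a - R b)) \<le> c0 * norm (a - b)}"
      by (intro closed_Collect_le continuous_intros cont_mv2 Rc)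
    moreover have "ball mr \<epsilon> \<subseteq> {b. norm (Mi *v (R a - R b)) \<le> c0 * norm (a - b)}"
      using Rlip1 that(1) by auto
    ultimately have "closure (ball mr \<epsilon>) \<subseteq> {b. norm (Mi *v (R a - R b)) \<le> c0 * norm (a - b)}"
      by (rule closure_minimal[rotated])
    then show ?thesis using that(2) clb by auto
  qed
  have Psi_in: "Psi u \<in> cball mr \<epsilon>" for u
    using norm_phi[of "u - mr"] \<open>et \<le> \<epsilon>\<close> by (simp add: Psi_def dist_norm)
  have Psi_lip: "norm (Psi u - Psi v) \<le> norm (u - v)" for u v
    using phi_lipschitz[of "u - mr" "v - mr"] by (simp add: Psi_def)
  have fdiff: "f u - f v = M *v (u - v) + (R (Psi u) - R (Psi v))" for u v
  proof -
    have "SY *v (F us + J us *v (X *v u + up + mu - us) - y) - SY *v (F us + J us *v (X *v v + up + mu - us) - y)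
        = SY *v (J us *v (X *v (u - v)))"
      by (simp add: matrix_vector_mult_diff_distrib matrix_vector_right_distrib)
    also have "\<dots> = S *v (S *v (u - v))" by (rule SYJX)
    finally show ?thesis
      by (simp add: f_def M_def matrix_vector_mult_add_rdistrib matrix_vector_mul_assoc algebra_simps)
  qed
  have lip: "norm (Mi *v (f u - f v) - (u - v)) \<le> c0 * norm (u - v)" for u v
  proof -
    have "Mi *v (f u - f v) - (u - v) = Mi *v (R (Psi u) - R (Psi v))"
      by (simp add: fdiff matrix_vector_right_distrib matrix_vector_mul_assoc MMi)
    also have "norm \<dots> \<le> c0 * norm (Psi u - Psi v)" by (rule Rlip[OF Psi_in Psi_in])
    also have "\<dots> \<le> c0 * norm (u - v)" by (rule mult_left_mono[OF Psi_lip c0(1)])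
    finally show ?thesis .
  qed
  have "C1_diffeomorphism f" by (rule abstract_diffeo[OF fd Lc MMi(1) lip c0(1) c0(2)])
  moreover have "(\<lambda>ur.
       (ur + (S ** transpose Y) *v (F us + J us *v (X *v ur + up + mu - us) - y))
     + (S ** transpose Y) *v
         (F (X *v Psi_map et \<tau> (transpose X ** (\<delta> *\<^sub>R P) *v (us - mu)) ur + up + mu)
          - J us *v (X *v Psi_map et \<tau> (transpose X ** (\<delta> *\<^sub>R P) *v (us - mu)) ur + up + mu - us)
          - F us)) = f"
    unfolding mr_def[symmetric] Psi_eq by (simp add: f_def[abs_def] R_def SY_def)
  ultimately show "C1_diffeomorphism (\<lambda>ur.
       (ur + (S ** transpose Y) *v (F us + J us *v (X *v ur + up + mu - us) - y))
     + (S ** transpose Y) *v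
         (F (X *v Psi_map et \<tau> (transpose X ** (\<delta> *\<^sub>R P) *v (us - mu)) ur + up + mu)
          - J us *v (X *v Psi_map et \<tau> (transpose X ** (\<delta> *\<^sub>R P) *v (us - mu)) ur + up + mu - us)
          - F us))" by simp
qed

end
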